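(* In the linear setting described in the context, for every $1\le t\le T$, $$\|\overline{\mathbf q}_t-\mathbf x_t\|_2^2\le\|\boldsymbol\theta_{t-1}\cdots\boldsymbol\theta_0\|_2^2\Big(\alpha^{2t}\|\mathbf z^\perp\|_2^2+\|\mathbf z^\parallel\|_2^2+\gamma_t\|\mathbf z\|_2^2\big(\gamma_t\alpha^2(1-\alpha^{t-1})^2+2(\alpha-\alpha^t)\big)\Big),$$ where $\gamma_t=\max_{0\le s\le t}\big(1+\kappa(\overline{\boldsymbol\theta}_s)^2\big)\|\mathbf I-\overline{\boldsymbol\theta}_s^T\overline{\boldsymbol\theta}_s\|_2$ with $\overline{\boldsymbol\theta}_0=\mathbf I$ and $\overline{\boldsymbol\theta}_s=\boldsymbol\theta_{s-1}\cdots\boldsymbol\theta_0$. Moreover, if all $\boldsymbol\theta_t$ are orthogonal matrices, then $$\|\overline{\mathbf q}_t-\mathbf x_t\|_2^2=\alpha^{2t}\|\mathbf z^\perp\|_2^2+\|\mathbf z^\parallel\|_2^2.$$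
   Context: Linear setting: fix integers $1\le r\le d$, $T\ge1$, a control regularization constant $c>0$, and $\alpha=\frac{c}{1+c}$. For $t=0,\dots,T$, $Z^t\subset\mathbb{R}^d$ is an $r$-dimensional linear subspace (the tangent space of the $t$-th embedding manifold), $\mathbf P_t$ is the orthogonal projection onto $Z^t$, $\mathbf Q_t=\mathbf I-\mathbf P_t$, and $\mathbf K_t=(c\mathbf I+\mathbf Q_t^T\mathbf Q_t)^{-1}\mathbf Q_t^T\mathbf Q_t$. For $t=0,\dots,T-1$, $\boldsymbol\theta_t\in\mathbb{R}^{d\times d}$ is invertible with $\boldsymbol\theta_tZ^t=Z^{t+1}$. The clean trajectory is $\mathbf x_0\in Z^0$, $\mathbf x_{t+1}=\boldsymbol\theta_t\mathbf x_t$. Given a perturbation $\mathbf z\in\mathbb{R}^d$, write $\mathbf z^\parallel=\mathbf P_0\mathbf z$ and $\mathbf z^\perp=\mathbf z-\mathbf P_0\mathbf z$; the controlled perturbed trajectory is $\overline{\mathbf q}_0=\mathbf x_0+\mathbf z$, $\overline{\mathbf q}_{t+1}=\boldsymbol\theta_t(\mathbf I-\mathbf K_t)\overline{\mathbf q}_t$ (i.e. $\overline{\mathbf q}_{t+1}=\boldsymbol\theta_t(\overline{\mathbf q}_t+\mathbf u_t)$ with the feedback control $\mathbf u_t=-\mathbf K_t\overline{\mathbf q}_t$ minimizing $\frac12\|\mathbf Q_t(\overline{\mathbf q}_t+\mathbf u)\|_2^2+\frac c2\|\mathbf u\|_2^2$). $\|\cdot\|_2$ is the Euclidean norm on vectors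 and the spectral norm on matrices; $\kappa(\mathbf A)=\|\mathbf A\|_2\|\mathbf A^{-1}\|_2$. *)

theory Defs
  imports "HOL-Analysis.Analysis"
begin

definition orth_proj :: "(real^'n) set \<Rightarrow> real^'n \<Rightarrow> real^'n" where
  "orth_proj Z x = (THE y. y \<in> Z \<and> (\<forall>w\<in>Z. (x - y) \<bullet> w = 0))"

definition projP :: "(real^'n) set \<Rightarrow> real^'n^'n" where
  "projP Z = matrix (orth_proj Z)"

definition projQ :: "(real^'n) set \<Rightarrow> real^'n^'n" where
  "projQ Z = mat 1 - projP Z"

definition gainK :: "real \<Rightarrow> (real^'n) set \<Rightarrow> real^'n^'n" where
  "gainK c Z = matrix_inv (c *\<^sub>R mat 1 + transpose (projQ Z) ** projQ Z)
                 ** (transpose (projQ Z) ** projQ Z)"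

definition specnorm :: "real^'n^'m \<Rightarrow> real" where
  "specnorm A = onorm (\<lambda>x. A *v x)"

definition cond_num :: "real^'n^'n \<Rightarrow> real" where
  "cond_num A = specnorm A * specnorm (matrix_inv A)"

primrec thbar :: "(nat \<Rightarrow> real^'n^'n) \<Rightarrow> nat \<Rightarrow> real^'n^'n" where
  "thbar \<theta> 0 = mat 1"
| "thbar \<theta> (Suc s) = \<theta> s ** thbar \<theta> s"

definition gamma :: "(nat \<Rightarrow> real^'n^'n) \<Rightarrow> nat \<Rightarrow> real" where
  "gamma \<theta> t = Max ((\<lambda>s. (1 + (cond_num (thbar \<theta> s))\<^sup>2) *
       specnorm (mat 1 - transpose (thbar \<theta> s) ** thbar \<theta> s)) ` {0..t})"

end

theory Submission
  imports Defs
begin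

lemma sn_bound: "norm (A *v x) \<le> specnorm A * norm x"
  unfolding specnorm_def by (rule onorm) simp

lemma sn_nonneg: "0 \<le> specnorm A"
  unfolding specnorm_def by (rule onorm_pos_le) simp

lemma sn_le: "(\<And>x. norm (A *v x) \<le> b * norm x) \<Longrightarrow> specnorm (A::real^'n^'m) \<le> b"
  unfolding specnorm_def by (rule onorm_le) auto

lemma minv: assumes "invertible (A::real^'n^'n)"
  shows "A ** matrix_inv A = mat 1" "matrix_inv A ** A = mat 1"
proof -
  have "\<exists>A'. A ** A' = mat 1 \<and> A' ** A = mat 1" using assms unfolding invertible_def by blast
  then have "A ** matrix_inv A = mat 1 \<and> matrix_inv A ** A = mat 1"
    unfolding matrix_inv_def by (rule someI_ex)
  then show "A ** matrix_inv A = mat 1" "matrix_inv A ** A = mat 1" by blast+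
qed

lemma minv_unique: assumes "(A::real^'n^'n) ** B = mat 1" "B ** A = (mat 1::real^'n^'n)"
  shows "matrix_inv A = B"
proof -
  have inv: "invertible A" using assms unfolding invertible_def by blast
  have "matrix_inv A = matrix_inv A ** (A ** B)" by (simp only: assms(1) matrix_mul_rid)
  also have "\<dots> = (matrix_inv A ** A) ** B" by (simp only: matrix_mul_assoc)
  also have "\<dots> = B" by (simp only: minv(2)[OF inv] matrix_mul_lid)
  finally show ?thesis .
qed

lemma op_ex: fixes S :: "(real^'n) set" assumes "subspace S"
  shows "\<exists>!y. y \<in> S \<and> (\<forall>w\<in>S. (x - y) \<bullet> w = 0)"
proof -
  obtain y z where y: "y \<in> span S" and z: "\<And>w. w \<in> span S \<Longrightarrow> orthogonal z w" and xe: "x = y + z"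
    using orthogonal_subspace_decomp_exists[of S x] by blast
  have sp: "span S = S" using assms by (simp add: span_eq_iff)
  have xy: "x - y = z" using xe by simp
  have ex: "y \<in> S \<and> (\<forall>w\<in>S. (x - y) \<bullet> w = 0)"
    using y z unfolding sp xy orthogonal_def by blast
  show ?thesis
  proof (rule ex1I[of _ y])
    show "y \<in> S \<and> (\<forall>w\<in>S. (x - y) \<bullet> w = 0)" by (fact ex)
    fix y' assume h: "y' \<in> S \<and> (\<forall>w\<in>S. (x - y') \<bullet> w = 0)"
    have d: "y' - y \<in> S" using h ex assms by (simp add: subspace_diff)
    have e: "(x - y) - (x - y') = y' - y" by simp
    have "(y' - y) \<bullet> (y' - y) = (x - y) \<bullet> (y' - y) - (x - y') \<bullet> (y' - y)"
      by (simp only: e inner_diff_left[symmetric])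
    also have "\<dots> = 0" using d h ex by simp
    finally show "y' = y" by simp
  qed
qed

lemma op_props0: assumes "subspace S"
  shows "orth_proj S x \<in> S \<and> (\<forall>w\<in>S. (x - orth_proj S x) \<bullet> w = 0)"
  unfolding orth_proj_def by (rule theI'[OF op_ex[OF assms]])

lemma op_props: assumes "subspace S"
  shows "orth_proj S x \<in> S" "\<And>w. w \<in> S \<Longrightarrow> (x - orth_proj S x) \<bullet> w = 0"
  using op_props0[OF assms, of x] by blast+

lemma op_unique: assumes "subspace S" "y \<in> S" "\<And>w. w \<in> S \<Longrightarrow> (x - y) \<bullet> w = 0"
  shows "orth_proj S x = y"
  unfolding orth_proj_def by (rule the1_equality[OF op_ex[OF assms(1)]]) (use assms(2,3) in blast)

lemma op_linear: assumes "subspace S" shows "linear (orth_proj S)"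
proof
  fix a b
  show "orth_proj S (a + b) = orth_proj S a + orth_proj S b"
    apply (rule op_unique[OF assms])
     apply (simp add: assms op_props subspace_add)
  proof -
    fix w assume w: "w \<in> S"
    have e: "a + b - (orth_proj S a + orth_proj S b) = (a - orth_proj S a) + (b - orth_proj S b)" by simp
    show "(a + b - (orth_proj S a + orth_proj S b)) \<bullet> w = 0"
      unfolding e inner_add_left using op_props(2)[OF assms w] by simp
  qed
next
  fix r and a :: "real^'a"
  show "orth_proj S (r *\<^sub>R a) = r *\<^sub>R orth_proj S a"
    apply (rule op_unique[OF assms])
     apply (simp add: assms op_props subspace_scale)
    by (simp add: scaleR_diff_right[symmetric] op_props(2)[OF assms])
qed

lemma projP_mv: assumes "subspace S" shows "projP S *v x = orth_proj S x"
  unfolding projP_def using op_linear[OF assms] by (simp add: matrix_works linear_matrix_vector_mul_eq)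

lemma op_sym: assumes "subspace S" shows "orth_proj S x \<bullet> y = x \<bullet> orth_proj S y"
proof -
  have a: "(y - orth_proj S y) \<bullet> orth_proj S x = 0" by (rule op_props(2)[OF assms op_props(1)[OF assms]])
  have b: "(x - orth_proj S x) \<bullet> orth_proj S y = 0" by (rule op_props(2)[OF assms op_props(1)[OF assms]])
  have "orth_proj S x \<bullet> y = orth_proj S x \<bullet> orth_proj S y + (y - orth_proj S y) \<bullet> orth_proj S x"
    using inner_diff_right[of "orth_proj S x" y "orth_proj S y"] inner_commute[of "y - orth_proj S y" "orth_proj S x"] by linarith
  also have "\<dots> = orth_proj S x \<bullet> orth_proj S y + (x - orth_proj S x) \<bullet> orth_proj S y"
    by (simp only: a b)
  also have "\<dots> = x \<bullet> orth_proj S y" by (simp add: inner_diff_left)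
  finally show ?thesis .
qed

lemma projQ_mv: assumes "subspace S" shows "projQ S *v x = x - orth_proj S x"
  unfolding projQ_def by (simp only: matrix_vector_mult_diff_rdistrib projP_mv[OF assms] matrix_vector_mul_lid)

lemma op_idem: assumes "subspace S" shows "orth_proj S (orth_proj S x) = orth_proj S x"
  by (rule op_unique[OF assms]) (simp_all add: op_props(1)[OF assms])

lemma op_perp0: assumes "subspace S" shows "orth_proj S (x - orth_proj S x) = 0"
  by (rule op_unique[OF assms]) (simp_all add: op_props(2)[OF assms] subspace_0[OF assms])

lemma QtQ: assumes "subspace S" shows "transpose (projQ S) ** projQ S = projQ S"
proof -
  let ?Q = "projQ S"
  have symQ: "transpose ?Q *v y = ?Q *v y" for y
  proof -
    have "(transpose ?Q *v y) \<bullet> u = (?Q *v y) \<bullet> u" for u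
    proof -
      have "(transpose ?Q *v y) \<bullet> u = y \<bullet> (?Q *v u)" by (simp add: dot_lmul_matrix)
      also have "\<dots> = y \<bullet> u - y \<bullet> orth_proj S u" by (simp add: projQ_mv[OF assms] inner_diff_right)
      also have "\<dots> = y \<bullet> u - orth_proj S y \<bullet> u" by (simp add: op_sym[OF assms])
      also have "\<dots> = (?Q *v y) \<bullet> u" by (simp add: projQ_mv[OF assms] inner_diff_left)
      finally show ?thesis .
    qed
    then show ?thesis using vector_eq_rdot by blast
  qed
  have symQ': "y v* ?Q = ?Q *v y" for y using symQ[of y] by simp
  have "?Q *v (?Q *v x) = ?Q *v x" for x
    using op_perp0[OF assms, of x] by (simp add: projQ_mv[OF assms])
  then show ?thesis
    by (simp add: matrix_eq matrix_vector_mul_assoc[symmetric] symQ')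
qed

lemma gainK_mv: assumes "subspace S" "c > 0"
  shows "gainK c S *v x = (1/(1+c)) *\<^sub>R (x - orth_proj S x)"
proof -
  let ?Q = "projQ S"
  define b where "b = 1/(1+c)"
  define X where "X = (1/c) *\<^sub>R (mat 1 - b *\<^sub>R ?Q)"
  have QQ: "?Q *v (?Q *v y) = ?Q *v y" for y
    using op_perp0[OF assms(1), of y] by (simp add: projQ_mv[OF assms(1)])
  have Mv: "(c *\<^sub>R mat 1 + ?Q) *v y = c *\<^sub>R y + ?Q *v y" for y
    by (simp only: matrix_vector_mult_add_rdistrib scaleR_matrix_vector_assoc[symmetric] matrix_vector_mul_lid)
  have Xv: "X *v y = (1/c) *\<^sub>R (y - b *\<^sub>R (?Q *v y))" for y
    by (simp only: X_def matrix_vector_mult_diff_rdistrib scaleR_matrix_vector_assoc[symmetric] matrix_vector_mul_lid)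
  have QX: "?Q *v (X *v y) = (1/c) *\<^sub>R (1 - b) *\<^sub>R (?Q *v y)" for y
    by (simp only: Xv matrix_vector_mult_scaleR matrix_vector_mult_diff_distrib QQ scaleR_diff_left scaleR_one)
  have XQ: "X *v (?Q *v y) = (1/c) *\<^sub>R (1 - b) *\<^sub>R (?Q *v y)" for y
    by (simp only: Xv QQ scaleR_diff_left scaleR_one)
  have c1': "1 + c > 0" using assms(2) by simp
  have b1: "(1 + c) * b = 1" using c1' by (simp add: b_def)
  have cb1: "c * b + b = 1" using b1 by (simp add: algebra_simps)
  have cb2: "(1/c) * (1 - b) = b"
  proof -
    have "1 - b = c * b" using b1 by (simp add: algebra_simps)
    then show ?thesis using assms(2) by simp
  qed
  have cb3: "b/c + (1-b)/c = 1/c" by (simp add: add_divide_distrib[symmetric])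
  note cb = cb1 cb2 cb3
  have cX: "c *\<^sub>R (X *v y) = y - b *\<^sub>R (?Q *v y)" for y using assms(2) by (simp add: Xv)
  have "(c *\<^sub>R mat 1 + ?Q) ** X = mat 1"
    unfolding matrix_eq
  proof
    fix y
    have "((c *\<^sub>R mat 1 + ?Q) ** X) *v y = c *\<^sub>R (X *v y) + ?Q *v (X *v y)"
      by (simp only: matrix_vector_mul_assoc[symmetric] Mv)
    also have "\<dots> = (y - b *\<^sub>R (?Q *v y)) + ((1/c) * (1 - b)) *\<^sub>R (?Q *v y)"
      using assms(2) by (simp only: QX cX scaleR_scaleR)
    also have "\<dots> = y" using cb2 by simp
    finally show "((c *\<^sub>R mat 1 + ?Q) ** X) *v y = mat 1 *v y" by simp
  qed
  moreover have "X ** (c *\<^sub>R mat 1 + ?Q) = mat 1"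
    unfolding matrix_eq
  proof
    fix y
    have "(X ** (c *\<^sub>R mat 1 + ?Q)) *v y = c *\<^sub>R (X *v y) + X *v (?Q *v y)"
      by (simp only: matrix_vector_mul_assoc[symmetric] Mv matrix_vector_right_distrib matrix_vector_mult_scaleR)
    also have "\<dots> = (y - b *\<^sub>R (?Q *v y)) + ((1/c) * (1 - b)) *\<^sub>R (?Q *v y)"
      using assms(2) by (simp only: XQ cX scaleR_scaleR)
    also have "\<dots> = y" using cb2 by simp
    finally show "(X ** (c *\<^sub>R mat 1 + ?Q)) *v y = mat 1 *v y" by simp
  qed
  ultimately have inv: "matrix_inv (c *\<^sub>R mat 1 + ?Q) = X" by (rule minv_unique)
  have "gainK c S *v x = X *v (?Q *v x)"
    unfolding gainK_def QtQ[OF assms(1)] inv by (simp only: matrix_vector_mul_assoc)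
  also have "\<dots> = b *\<^sub>R (?Q *v x)"
    using cb2 by (simp only: XQ scaleR_scaleR)
  finally show ?thesis by (simp add: projQ_mv[OF assms(1)] b_def)
qed


lemma AtA_inner: "x \<bullet> ((transpose A ** A) *v x) = (norm ((A::real^'n^'m) *v x))^2"
proof -
  have "(transpose A ** A) *v x = (A *v x) v* A"
    by (simp only: matrix_vector_mul_assoc[symmetric] transpose_matrix_vector)
  then have "x \<bullet> ((transpose A ** A) *v x) = ((A *v x) v* A) \<bullet> x" by (simp add: inner_commute)
  also have "\<dots> = (A *v x) \<bullet> (A *v x)" by (simp only: dot_lmul_matrix)
  finally show ?thesis by (simp add: power2_norm_eq_inner)
qed

lemma dev_bound: fixes A :: "real^'n^'n"
  shows "\<bar>(norm x)^2 - (norm (A *v x))^2\<bar> \<le> specnorm (mat 1 - transpose A ** A) * (norm x)^2"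
proof -
  let ?M = "mat 1 - transpose A ** A"
  have "x \<bullet> (?M *v x) = (norm x)^2 - (norm (A *v x))^2"
    by (simp add: matrix_vector_mult_diff_rdistrib inner_diff_right AtA_inner power2_norm_eq_inner)
  moreover have "\<bar>x \<bullet> (?M *v x)\<bar> \<le> norm x * norm (?M *v x)" by (rule Cauchy_Schwarz_ineq2)
  moreover have "norm x * norm (?M *v x) \<le> norm x * (specnorm ?M * norm x)"
    by (rule mult_left_mono[OF sn_bound norm_ge_zero])
  ultimately show ?thesis by (simp add: power2_eq_square mult_ac)
qed

lemma polar: fixes a b :: "real^'n"
  shows "4 * (a \<bullet> b) = (norm (a + b))^2 - (norm (a - b))^2"
  by (simp add: power2_norm_eq_inner inner_add_left inner_add_right inner_diff_left inner_diff_right inner_commute)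

lemma kappa_ineq: fixes X Y d :: real
  assumes "X \<le> 1 + d" "Y * (1 - d) \<le> 1" "0 \<le> d" "0 \<le> X" "0 < Y" "1 \<le> X * Y"
  shows "X * Y - 1 \<le> 2 * (1 + X * Y) * d"
proof (cases "1 + X * Y \<ge> Y")
  case True
  have "X * Y \<le> (1 + d) * Y" using assms by (simp add: mult_right_mono)
  then have "X * Y - 1 \<le> 2 * d * Y" using assms(2) by (simp add: algebra_simps)
  also have "\<dots> \<le> 2 * d * (1 + X * Y)" using True assms(3) by (simp add: mult_left_mono)
  finally show ?thesis by (simp add: mult_ac)
next
  case False
  then have Y2: "Y > 1 + X * Y" by simp
  have XY: "X * Y \<ge> 0" using assms by simp
  have "2 * d \<ge> 1"
  proof (rule ccontr)
    assume "\<not> 2 * d \<ge> 1"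
    then have "2 * d < 1" by simp
    then have "Y * (2 * d) < Y * 1" using assms(5) by (rule mult_strict_left_mono)
    moreover have "Y * (2 * d) \<ge> 2 * Y - 2" using assms(2) by (simp add: algebra_simps)
    moreover have "2 * Y - 2 \<ge> Y" using Y2 assms(6) by simp
    ultimately show False by linarith
  qed
  then have "(1 + X * Y) * 1 \<le> (1 + X * Y) * (2 * d)" using XY by (intro mult_left_mono) simp_all
  then show ?thesis by (simp add: mult_ac)
qed


lemma sq_to_norm: assumes "0 \<le> k" "(norm y)^2 \<le> k * (norm x)^2"
  shows "norm y \<le> sqrt k * norm (x::real^'n)"
proof -
  have "norm y \<le> sqrt (k * (norm x)^2)" using assms(2) by (rule real_le_rsqrt)
  also have "\<dots> = sqrt k * norm x" by (simp add: real_sqrt_mult)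
  finally show ?thesis .
qed

lemma sn_sq_le: assumes "0 \<le> k" "\<And>x. (norm (A *v x))^2 \<le> k * (norm x)^2"
  shows "(specnorm (A::real^'n^'m))^2 \<le> k"
proof -
  have "specnorm A \<le> sqrt k" by (rule sn_le, rule sq_to_norm[OF assms])
  then have "(specnorm A)^2 \<le> (sqrt k)^2" by (rule power_mono[OF _ sn_nonneg])
  then show ?thesis using assms(1) by simp
qed

lemma key:
  fixes A :: "real^'n^'n"
  assumes inv: "invertible A" and vp: "v \<bullet> p = 0"
    and orth: "(A *v v - A *v p) \<bullet> (A *v p) = 0"
  shows "norm p \<le> (1 + (cond_num A)^2) * specnorm (mat 1 - transpose A ** A) * norm v"
proof -
  define N where "N = specnorm A"
  define Ni where "Ni = specnorm (matrix_inv A)"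
  define d where "d = specnorm (mat 1 - transpose A ** A)"
  have kap: "cond_num A = N * Ni" by (simp add: cond_num_def N_def Ni_def)
  have N0: "0 \<le> N" "0 \<le> Ni" "0 \<le> d" by (simp_all add: N_def Ni_def d_def sn_nonneg)
  have hA: "norm (A *v x) \<le> N * norm x" for x unfolding N_def by (rule sn_bound)
  have hAi: "norm x \<le> Ni * norm (A *v x)" for x
  proof -
    have "x = matrix_inv A *v (A *v x)" by (simp add: matrix_vector_mul_assoc minv(2)[OF inv])
    then have "norm x = norm (matrix_inv A *v (A *v x))" by simp
    also have "\<dots> \<le> Ni * norm (A *v x)" unfolding Ni_def by (rule sn_bound)
    finally show ?thesis .
  qed
  have hA2: "(norm (A *v x))^2 \<le> N^2 * (norm x)^2" for x
    using power_mono[OF hA[of x] norm_ge_zero] by (simp add: power_mult_distrib)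
  have hAi2: "(norm x)^2 \<le> Ni^2 * (norm (A *v x))^2" for x
    using power_mono[OF hAi[of x] norm_ge_zero] by (simp add: power_mult_distrib)
  have dev: "\<bar>(norm x)^2 - (norm (A *v x))^2\<bar> \<le> d * (norm x)^2" for x
    unfolding d_def by (rule dev_bound)
  have X: "N^2 \<le> 1 + d"
    unfolding N_def
  proof (rule sn_sq_le)
    show "0 \<le> 1 + d" using N0 by simp
    fix x show "(norm (A *v x))^2 \<le> (1 + d) * (norm x)^2" using dev[of x] by (simp add: algebra_simps)
  qed
  have Y: "Ni^2 * (1 - d) \<le> 1"
  proof (cases "d \<ge> 1")
    case True
    then have "Ni^2 * (1 - d) \<le> 0" by (simp add: mult_nonneg_nonpos)
    then show ?thesis by simp
  next
    case False
    then have d1: "0 < 1 - d" by simp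
    have "Ni^2 \<le> 1 / (1 - d)"
      unfolding Ni_def
    proof (rule sn_sq_le)
      show "0 \<le> 1 / (1 - d)" using d1 by simp
      fix y
      let ?x = "matrix_inv A *v y"
      have Ax: "A *v ?x = y" by (simp add: matrix_vector_mul_assoc minv(1)[OF inv])
      have "(norm ?x)^2 - (norm y)^2 \<le> d * (norm ?x)^2" using dev[of ?x] unfolding Ax by simp
      then have "(1 - d) * (norm ?x)^2 \<le> (norm y)^2" by (simp add: algebra_simps)
      then show "(norm ?x)^2 \<le> 1 / (1 - d) * (norm y)^2" using d1 by (simp add: field_simps)
    qed
    then show ?thesis using d1 by (simp add: field_simps)
  qed
  have k1: "1 \<le> N^2 * Ni^2"
  proof -
    let ?e = "axis undefined (1::real) :: real^'n"
    have "1 \<le> Ni * norm (A *v ?e)" using hAi[of ?e] by simp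
    also have "\<dots> \<le> Ni * (N * 1)" using hA[of ?e] N0 by (simp add: mult_left_mono)
    finally have NN: "1 \<le> N * Ni" by (simp add: mult_ac)
    have "1 * 1 \<le> (N * Ni) * (N * Ni)" using NN N0 by (intro mult_mono) simp_all
    then show ?thesis by (simp add: power2_eq_square mult_ac)
  qed
  have Ni_pos: "0 < Ni^2" using k1 N0 by (metis mult_zero_right not_one_le_zero zero_less_power2 power_zero_numeral)
  have kineq: "N^2 * Ni^2 - 1 \<le> 2 * (1 + N^2 * Ni^2) * d"
    by (rule kappa_ineq[OF X Y N0(3) _ Ni_pos k1]) simp
  define a where "a = norm v"
  define b where "b = norm p"
  have RHS0: "0 \<le> (1 + (cond_num A)^2) * d * a" using N0 by (simp add: a_def)
  have Apv: "(norm (A *v p))^2 = (A *v v) \<bullet> (A *v p)"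
    using orth by (simp add: inner_diff_left power2_norm_eq_inner)
  show ?thesis
  proof (cases "b = 0 \<or> a = 0")
    case True
    show ?thesis
    proof (cases "b = 0")
      case True then show ?thesis using RHS0 by (simp add: b_def a_def d_def)
    next
      case False
      then have "v = 0" using \<open>b = 0 \<or> a = 0\<close> by (simp add: a_def)
      then have "(norm (A *v p))^2 = 0" using Apv by simp
      then have "(norm p)^2 \<le> 0" using hAi2[of p] by simp
      then show ?thesis using RHS0 by (simp add: a_def d_def)
    qed
  next
    case False
    then have apos: "a > 0" and bpos: "b > 0" by (auto simp: a_def b_def)
    define u where "u = (1/a) *\<^sub>R v"
    define q where "q = (1/b) *\<^sub>R p"
    have vu: "v = a *\<^sub>R u" and pq: "p = b *\<^sub>R q" using apos bpos by (simp_all add: u_def q_def a_def b_def)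
    have uq: "u \<bullet> q = 0" using vp by (simp add: u_def q_def)
    have nu: "(norm u)^2 = 1" "(norm q)^2 = 1" using apos bpos by (simp_all add: u_def q_def a_def b_def)
    have s1: "(norm (u + q))^2 = 2" "(norm (u - q))^2 = 2" using uq nu
      by (simp_all add: power2_norm_eq_inner inner_add_left inner_add_right inner_diff_left inner_diff_right inner_commute)
    have pol: "4 * ((A *v u) \<bullet> (A *v q)) = (norm (A *v (u + q)))^2 - (norm (A *v (u - q)))^2"
      by (simp add: polar matrix_vector_right_distrib matrix_vector_mult_diff_distrib)
    have t1: "(norm (A *v (u + q)))^2 \<le> N^2 * 2" using hA2[of "u + q"] s1 by simp
    have t2: "2 \<le> Ni^2 * (norm (A *v (u - q)))^2" using hAi2[of "u - q"] s1 by simp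
    have "Ni^2 * (4 * ((A *v u) \<bullet> (A *v q))) \<le> Ni^2 * (N^2 * 2) - 2"
    proof -
      have t1': "Ni^2 * (norm (A *v (u + q)))^2 \<le> Ni^2 * (N^2 * 2)" by (rule mult_left_mono[OF t1]) simp
      show ?thesis unfolding pol right_diff_distrib using t1' t2 by linarith
    qed
    then have uqb: "2 * (Ni^2 * ((A *v u) \<bullet> (A *v q))) \<le> N^2 * Ni^2 - 1" by (simp add: algebra_simps)
    have Avp: "(A *v v) \<bullet> (A *v p) = a * b * ((A *v u) \<bullet> (A *v q))"
      by (simp add: vu pq matrix_vector_mult_scaleR)
    have "b^2 \<le> Ni^2 * (norm (A *v p))^2" using hAi2[of p] by (simp add: b_def)
    also have "\<dots> = a * b * (Ni^2 * ((A *v u) \<bullet> (A *v q)))" by (simp add: Apv Avp mult_ac)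
    also have "\<dots> \<le> a * b * ((N^2 * Ni^2 - 1) / 2)"
      using uqb apos bpos by (intro mult_left_mono) simp_all
    finally have "b * b \<le> b * (a * ((N^2 * Ni^2 - 1) / 2))" by (simp add: power2_eq_square mult_ac)
    then have "b \<le> a * ((N^2 * Ni^2 - 1) / 2)" using bpos by simp
    also have "\<dots> \<le> a * ((1 + N^2 * Ni^2) * d)" using kineq apos by (intro mult_left_mono) (simp_all add: algebra_simps)
    finally show ?thesis by (simp add: a_def b_def d_def kap power_mult_distrib mult_ac)
  qed
qed


lemma main_inv:
  fixes Z :: "nat \<Rightarrow> (real^'n) set"
    and \<theta> :: "nat \<Rightarrow> real^'n^'n"
    and E :: "nat \<Rightarrow> real^'n"
    and zp zq :: "real^'n"
  assumes subZ: "\<And>t. t \<le> T \<Longrightarrow> subspace (Z t)"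
    and Ainv: "\<And>t. t \<le> T \<Longrightarrow> invertible (thbar \<theta> t)"
    and Zimg: "\<And>t. t \<le> T \<Longrightarrow> Z t = (\<lambda>v. thbar \<theta> t *v v) ` Z 0"
    and E0: "E 0 = zp + zq"
    and zpZ: "zp \<in> Z 0" and zqZ: "\<And>w. w \<in> Z 0 \<Longrightarrow> zq \<bullet> w = 0"
    and Estep: "\<And>t. t < T \<Longrightarrow> E (Suc t) = \<theta> t *v (E t - \<beta> *\<^sub>R (E t - orth_proj (Z t) (E t)))"
    and ab: "1 - \<beta> = \<alpha>" and a0: "0 \<le> \<alpha>" "\<alpha> \<le> 1"
    and g_le: "\<And>s. s \<le> t0 \<Longrightarrow> (1 + (cond_num (thbar \<theta> s))^2) * specnorm (mat 1 - transpose (thbar \<theta> s) ** thbar \<theta> s) \<le> G"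
    and t0T: "t0 \<le> T"
  shows "t \<le> t0 \<Longrightarrow> \<exists>e. e \<in> Z 0 \<and> E t = thbar \<theta> t *v (zp + \<alpha>^t *\<^sub>R zq + e)
            \<and> norm e \<le> G * (if t = 0 then 0 else \<alpha> - \<alpha>^t) * norm zq"
proof (induction t)
  case 0
  show ?case using E0 subspace_0[OF subZ[of 0]] by (intro exI[of _ 0]) simp
next
  case (Suc t)
  have tT: "t < T" using Suc.prems t0T by simp
  have tt0: "t \<le> t0" using Suc.prems by simp
  obtain e where eZ: "e \<in> Z 0" and Et: "E t = thbar \<theta> t *v (zp + \<alpha>^t *\<^sub>R zq + e)"
      and eb: "norm e \<le> G * (if t = 0 then 0 else \<alpha> - \<alpha>^t) * norm zq"
    using Suc.IH[OF tt0] by blast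
  let ?A = "thbar \<theta> t"
  let ?S = "Z t"
  have S: "subspace ?S" using subZ tT by simp
  have S0: "subspace (Z 0)" using subZ by simp
  have Simg: "?S = (\<lambda>v. ?A *v v) ` Z 0" by (rule Zimg) (use tT in simp)
  define u where "u = zp + e"
  define v where "v = \<alpha>^t *\<^sub>R zq"
  have uZ: "u \<in> Z 0" using zpZ eZ S0 by (simp add: u_def subspace_add)
  have Et2: "E t = ?A *v u + ?A *v v" using Et by (simp add: u_def v_def matrix_vector_right_distrib add_ac)
  have "orth_proj ?S (?A *v v) \<in> ?S" by (rule op_props(1)[OF S])
  then obtain p where pZ: "p \<in> Z 0" and Ap: "orth_proj ?S (?A *v v) = ?A *v p" using Simg by auto
  have Au: "orth_proj ?S (?A *v u) = ?A *v u"
    by (rule op_unique[OF S]) (use uZ Simg in auto)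
  have PE: "orth_proj ?S (?A *v u + ?A *v v) = ?A *v u + ?A *v p"
    using linear_add[OF op_linear[OF S]] Au Ap by simp
  define e' where "e' = e + \<beta> *\<^sub>R p"
  have "E t - \<beta> *\<^sub>R (E t - orth_proj ?S (E t)) = ?A *v (u + \<alpha> *\<^sub>R v + \<beta> *\<^sub>R p)"
    unfolding Et2 PE ab[symmetric]
    by (simp add: matrix_vector_right_distrib matrix_vector_mult_scaleR algebra_simps)
  then have "E (Suc t) = thbar \<theta> (Suc t) *v (u + \<alpha> *\<^sub>R v + \<beta> *\<^sub>R p)"
    using Estep[OF tT] by (simp add: matrix_vector_mul_assoc)
  also have "u + \<alpha> *\<^sub>R v + \<beta> *\<^sub>R p = zp + \<alpha>^(Suc t) *\<^sub>R zq + e'"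
    by (simp add: u_def v_def e'_def algebra_simps)
  finally have ESuc: "E (Suc t) = thbar \<theta> (Suc t) *v (zp + \<alpha>^(Suc t) *\<^sub>R zq + e')" .
  have e'Z: "e' \<in> Z 0" using eZ pZ S0 by (simp add: e'_def subspace_add subspace_scale)
  have vp: "v \<bullet> p = 0" using zqZ[OF pZ] by (simp add: v_def)
  have orth: "(?A *v v - ?A *v p) \<bullet> (?A *v p) = 0"
  proof -
    have "?A *v p \<in> ?S" using pZ Simg by auto
    from op_props(2)[OF S this, of "?A *v v"] show ?thesis by (simp add: Ap)
  qed
  have pb: "norm p \<le> (1 + (cond_num ?A)^2) * specnorm (mat 1 - transpose ?A ** ?A) * norm v"
    by (rule key[OF Ainv vp orth]) (use tT in simp)
  have nv: "norm v = \<alpha>^t * norm zq" using a0 by (simp add: v_def)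
  have b0: "0 \<le> \<beta>" using ab a0 by simp
  have ne': "norm e' \<le> norm e + \<beta> * norm p"
    unfolding e'_def using norm_triangle_ineq[of e "\<beta> *\<^sub>R p"] b0 by simp
  show ?case
  proof (intro exI[of _ e'] conjI e'Z ESuc)
    show "norm e' \<le> G * (if Suc t = 0 then 0 else \<alpha> - \<alpha>^Suc t) * norm zq"
    proof (cases "t = 0")
      case True
      have "specnorm (mat 1 - transpose (mat 1) ** (mat 1 :: real^'n^'n)) = 0"
        by (simp add: specnorm_def onorm_zero)
      then have "norm p \<le> 0" using pb True by simp
      then have "norm e' \<le> 0" using ne' eb True b0 by simp
      then show ?thesis using True by simp
    next
      case False
      have gt: "(1 + (cond_num ?A)^2) * specnorm (mat 1 - transpose ?A ** ?A) \<le> G" by (rule g_le[OF tt0])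
      have "norm p \<le> G * norm v" using pb gt by (meson mult_right_mono norm_ge_zero order_trans)
      then have "\<beta> * norm p \<le> \<beta> * (G * (\<alpha>^t * norm zq))" using b0 nv by (simp add: mult_left_mono)
      then have "norm e' \<le> G * (\<alpha> - \<alpha>^t) * norm zq + \<beta> * (G * (\<alpha>^t * norm zq))"
        using ne' eb False by simp
      also have "\<dots> = G * (\<alpha> - \<alpha>^Suc t) * norm zq"
      proof -
        have bb: "\<beta> = 1 - \<alpha>" using ab by simp
        show ?thesis unfolding bb by (simp add: algebra_simps)
      qed
      finally show ?thesis by simp
    qed
  qed
qed


theorem theorem1:
  fixes Z :: "nat \<Rightarrow> (real^'n) set"
    and \<theta> :: "nat \<Rightarrow> real^'n^'n"
    and x q :: "nat \<Rightarrow> real^'n"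
    and z :: "real^'n"
    and r T :: nat and c \<alpha> :: real
  assumes r_bounds: "1 \<le> r" "r \<le> CARD('n)"
    and T_pos: "1 \<le> T"
    and c_pos: "c > 0"
    and alpha_def: "\<alpha> = c / (1 + c)"
    and Z_sub: "\<And>t. t \<le> T \<Longrightarrow> subspace (Z t) \<and> dim (Z t) = r"
    and theta_inv: "\<And>t. t < T \<Longrightarrow> invertible (\<theta> t)"
    and theta_Z: "\<And>t. t < T \<Longrightarrow> (\<lambda>v. \<theta> t *v v) ` Z t = Z (Suc t)"
    and x0: "x 0 \<in> Z 0"
    and x_step: "\<And>t. t < T \<Longrightarrow> x (Suc t) = \<theta> t *v x t"
    and q0: "q 0 = x 0 + z"
    and q_step: "\<And>t. t < T \<Longrightarrow> q (Suc t) = \<theta> t *v ((mat 1 - gainK c (Z t)) *v q t)"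
  shows "(\<forall>t. 1 \<le> t \<and> t \<le> T \<longrightarrow>
            (norm (q t - x t))\<^sup>2 \<le> (specnorm (thbar \<theta> t))\<^sup>2 *
              (\<alpha> ^ (2 * t) * (norm (z - projP (Z 0) *v z))\<^sup>2 + (norm (projP (Z 0) *v z))\<^sup>2
               + gamma \<theta> t * (norm z)\<^sup>2 *
                 (gamma \<theta> t * \<alpha>\<^sup>2 * (1 - \<alpha> ^ (t - 1))\<^sup>2 + 2 * (\<alpha> - \<alpha> ^ t))))
       \<and> ((\<forall>t < T. orthogonal_matrix (\<theta> t)) \<longrightarrow>
          (\<forall>t. 1 \<le> t \<and> t \<le> T \<longrightarrow>
            (norm (q t - x t))\<^sup>2 = \<alpha> ^ (2 * t) * (norm (z - projP (Z 0) *v z))\<^sup>2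
                                  + (norm (projP (Z 0) *v z))\<^sup>2))"
proof -
  define \<beta> where "\<beta> = 1 / (1 + c)"
  have ab: "1 - \<beta> = \<alpha>" using c_pos unfolding alpha_def \<beta>_def by (simp add: field_simps)
  have a0: "0 \<le> \<alpha>" "\<alpha> \<le> 1" using c_pos unfolding alpha_def by simp_all
  have subZ: "\<And>t. t \<le> T \<Longrightarrow> subspace (Z t)" using Z_sub by blast
  have S0: "subspace (Z 0)" using subZ by simp
  have Ainv: "t \<le> T \<Longrightarrow> invertible (thbar \<theta> t)" for t
  proof (induction t)
    case 0 show ?case unfolding invertible_def by (intro exI[of _ "mat 1"]) simp
  next
    case (Suc t) then show ?case using theta_inv[of t] by (simp add: invertible_mult)
  qed
  have Zimg: "t \<le> T \<Longrightarrow> Z t = (\<lambda>v. thbar \<theta> t *v v) ` Z 0" for t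
  proof (induction t)
    case 0 show ?case by simp
  next
    case (Suc t)
    then have "Z (Suc t) = (\<lambda>v. \<theta> t *v v) ` ((\<lambda>v. thbar \<theta> t *v v) ` Z 0)"
      using theta_Z[of t] by simp
    then show ?case by (simp add: image_image matrix_vector_mul_assoc)
  qed
  have xZ: "t \<le> T \<Longrightarrow> x t \<in> Z t" for t
  proof (induction t)
    case 0 show ?case by (rule x0)
  next
    case (Suc t)
    then have "x (Suc t) \<in> (\<lambda>v. \<theta> t *v v) ` Z t" using x_step[of t] by simp
    then show ?case using theta_Z[of t] Suc.prems by simp
  qed
  define zp where "zp = orth_proj (Z 0) z"
  define zq where "zq = z - zp"
  have zpP: "projP (Z 0) *v z = zp" by (simp add: zp_def projP_mv[OF S0])
  have zpZ: "zp \<in> Z 0" unfolding zp_def by (rule op_props(1)[OF S0])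
  have zqZ: "\<And>w. w \<in> Z 0 \<Longrightarrow> zq \<bullet> w = 0" unfolding zq_def zp_def by (rule op_props(2)[OF S0])
  define E where "E t = q t - x t" for t
  have E0: "E 0 = zp + zq" by (simp add: E_def q0 zq_def)
  have Estep: "E (Suc t) = \<theta> t *v (E t - \<beta> *\<^sub>R (E t - orth_proj (Z t) (E t)))" if tT: "t < T" for t
  proof -
    have S: "subspace (Z t)" using subZ tT by simp
    have Px: "orth_proj (Z t) (x t) = x t" by (rule op_unique[OF S xZ]) (use tT in simp_all)
    have PE: "orth_proj (Z t) (q t - x t) = orth_proj (Z t) (q t) - x t"
      using linear_diff[OF op_linear[OF S]] Px by simp
    have "q (Suc t) = \<theta> t *v (q t - \<beta> *\<^sub>R (q t - orth_proj (Z t) (q t)))"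
      using q_step[OF tT] gainK_mv[OF S c_pos] by (simp add: matrix_vector_mult_diff_rdistrib \<beta>_def)
    then show ?thesis using x_step[OF tT] unfolding E_def PE
      by (simp add: matrix_vector_mult_diff_distrib[symmetric] algebra_simps)
  qed
  define g where "g s = (1 + (cond_num (thbar \<theta> s))^2) * specnorm (mat 1 - transpose (thbar \<theta> s) ** thbar \<theta> s)" for s
  have gam: "gamma \<theta> t = Max (g ` {0..t})" for t by (simp add: gamma_def g_def)
  have g_le: "s \<le> t \<Longrightarrow> g s \<le> gamma \<theta> t" for s t unfolding gam by (intro Max_ge) auto
  have gnn: "0 \<le> g s" for s by (simp add: g_def sn_nonneg)
  have gam_nn: "0 \<le> gamma \<theta> t" for t using g_le[of 0 t] gnn[of 0] by simp
  have inv: "\<exists>e. e \<in> Z 0 \<and> E t = thbar \<theta> t *v (zp + \<alpha>^t *\<^sub>R zq + e)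
            \<and> norm e \<le> gamma \<theta> t0 * (if t = 0 then 0 else \<alpha> - \<alpha>^t) * norm zq"
    if "t0 \<le> T" "t \<le> t0" for t t0
    by (rule main_inv[where T=T and Z=Z and \<beta>=\<beta>, OF subZ Ainv Zimg E0 zpZ zqZ Estep ab a0 _ that(1) that(2)])
       (use g_le in \<open>simp_all add: g_def\<close>)
  have nz: "(norm z)^2 = (norm zp)^2 + (norm zq)^2"
  proof -
    have "zp \<bullet> zq = 0" using zqZ[OF zpZ] by (simp add: inner_commute)
    then show ?thesis unfolding zq_def
      by (simp add: power2_norm_eq_inner inner_diff_left inner_diff_right inner_commute)
  qed
  have zpq: "zp \<bullet> zq = 0" using zqZ[OF zpZ] by (simp add: inner_commute)
  have nyk: "(norm (zp + k *\<^sub>R zq))^2 = (norm zp)^2 + k^2 * (norm zq)^2" for k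
  proof -
    have "(norm (zp + k *\<^sub>R zq))^2 = (zp + k *\<^sub>R zq) \<bullet> (zp + k *\<^sub>R zq)" by (rule power2_norm_eq_inner)
    also have "\<dots> = zp \<bullet> zp + k * k * (zq \<bullet> zq)" using zpq by (simp add: inner_add_left inner_add_right inner_commute)
    also have "\<dots> = (norm zp)^2 + k^2 * (norm zq)^2" by (simp only: power2_norm_eq_inner[symmetric] power2_eq_square)
    finally show ?thesis .
  qed
  have ny: "(norm (zp + \<alpha>^t *\<^sub>R zq))^2 = (norm zp)^2 + \<alpha>^(2*t) * (norm zq)^2" for t
    unfolding nyk by (simp add: power_mult[symmetric] mult.commute)
  show ?thesis
  proof (intro conjI allI impI)
    fix t assume t: "1 \<le> t \<and> t \<le> T"
    let ?G = "gamma \<theta> t"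
    let ?N = "specnorm (thbar \<theta> t)"
    let ?D = "\<alpha> - \<alpha>^t"
    obtain e where eZ: "e \<in> Z 0" and Et: "E t = thbar \<theta> t *v (zp + \<alpha>^t *\<^sub>R zq + e)"
        and eb: "norm e \<le> ?G * (if t = 0 then 0 else \<alpha> - \<alpha>^t) * norm zq"
      using inv[of t t] t by blast
    have tpos: "t \<noteq> 0" using t by simp
    have at: "\<alpha>^t = \<alpha> * \<alpha>^(t-1)" using tpos by (metis power_Suc Suc_pred' neq0_conv)
    have D0: "0 \<le> ?D"
    proof -
      have "\<alpha>^(t-1) \<le> 1" using a0 by (simp add: power_le_one)
      then have "\<alpha> * \<alpha>^(t-1) \<le> \<alpha> * 1" using a0 by (intro mult_left_mono) simp_all
      then show ?thesis using at by simp
    qed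
    have Dq: "?D = \<alpha> * (1 - \<alpha>^(t-1))" using at by (simp add: algebra_simps)
    define y where "y = zp + \<alpha>^t *\<^sub>R zq"
    define B where "B = ?G * ?D * norm z"
    have B0: "0 \<le> B" using gam_nn D0 by (simp add: B_def)
    have zqz: "norm zq \<le> norm z"
    proof -
      have "(norm zq)^2 \<le> (norm z)^2" using nz by simp
      then show ?thesis by (simp add: power2_le_iff_abs_le)
    qed
    have eB: "norm e \<le> B"
    proof -
      have "norm e \<le> ?G * ?D * norm zq" using eb tpos by simp
      also have "\<dots> \<le> ?G * ?D * norm z" using zqz gam_nn D0 by (intro mult_left_mono) simp_all
      finally show ?thesis by (simp add: B_def)
    qed
    have yz: "norm y \<le> norm z"
    proof -
      have "\<alpha>^(2*t) \<le> 1" using a0 by (simp add: power_le_one)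
      then have "\<alpha>^(2*t) * (norm zq)^2 \<le> 1 * (norm zq)^2" by (intro mult_right_mono) simp_all
      then have "(norm y)^2 \<le> (norm z)^2" unfolding y_def ny nz by simp
      then show ?thesis by (simp add: power2_le_iff_abs_le)
    qed
    have wb: "(norm (y + e))^2 \<le> (norm y)^2 + 2 * norm z * B + B^2"
    proof -
      have "norm (y + e) \<le> norm y + B" using norm_triangle_ineq[of y e] eB by simp
      then have "(norm (y + e))^2 \<le> (norm y + B)^2" by (rule power_mono) simp
      also have "\<dots> = (norm y)^2 + 2 * norm y * B + B^2" by (simp add: power2_sum)
      also have "\<dots> \<le> (norm y)^2 + 2 * norm z * B + B^2" using yz B0 by (simp add: mult_right_mono)
      finally show ?thesis .
    qed
    have "(norm (q t - x t))^2 = (norm (thbar \<theta> t *v (y + e)))^2" using Et by (simp add: E_def y_def)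
    also have "\<dots> \<le> (?N * norm (y + e))^2" by (rule power_mono[OF sn_bound norm_ge_zero])
    also have "\<dots> = ?N^2 * (norm (y + e))^2" by (simp add: power_mult_distrib)
    also have "\<dots> \<le> ?N^2 * ((norm y)^2 + 2 * norm z * B + B^2)" using wb by (simp add: mult_left_mono)
    also have "(norm y)^2 + 2 * norm z * B + B^2 = \<alpha> ^ (2 * t) * (norm (z - projP (Z 0) *v z))\<^sup>2 + (norm (projP (Z 0) *v z))\<^sup>2
               + ?G * (norm z)\<^sup>2 * (?G * \<alpha>\<^sup>2 * (1 - \<alpha> ^ (t - 1))\<^sup>2 + 2 * (\<alpha> - \<alpha> ^ t))"
      unfolding zpP zq_def[symmetric] y_def ny B_def Dq by (simp add: power2_eq_square algebra_simps)
    finally show "(norm (q t - x t))\<^sup>2 \<le> ?N\<^sup>2 *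
              (\<alpha> ^ (2 * t) * (norm (z - projP (Z 0) *v z))\<^sup>2 + (norm (projP (Z 0) *v z))\<^sup>2
               + ?G * (norm z)\<^sup>2 * (?G * \<alpha>\<^sup>2 * (1 - \<alpha> ^ (t - 1))\<^sup>2 + 2 * (\<alpha> - \<alpha> ^ t)))" .
  next
    fix t assume orthA: "\<forall>t < T. orthogonal_matrix (\<theta> t)" and t: "1 \<le> t \<and> t \<le> T"
    have orthbar: "s \<le> T \<Longrightarrow> orthogonal_matrix (thbar \<theta> s)" for s
    proof (induction s)
      case 0 show ?case by (simp add: orthogonal_matrix_id)
    next
      case (Suc s) then show ?case using orthA by (simp add: orthogonal_matrix_mul)
    qed
    have g0: "s \<le> T \<Longrightarrow> g s = 0" for s
    proof -
      assume "s \<le> T"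
      then have "transpose (thbar \<theta> s) ** thbar \<theta> s = mat 1" using orthbar orthogonal_matrix by blast
      moreover have "specnorm (0::real^'n^'n) = 0" by (simp add: specnorm_def onorm_zero)
      ultimately show "g s = 0" by (simp add: g_def)
    qed
    have G0: "gamma \<theta> t = 0"
    proof -
      have "g ` {0..t} = {0}" using g0 t by auto
      then show ?thesis by (simp add: gam)
    qed
    obtain e where eZ: "e \<in> Z 0" and Et: "E t = thbar \<theta> t *v (zp + \<alpha>^t *\<^sub>R zq + e)"
        and eb: "norm e \<le> gamma \<theta> t * (if t = 0 then 0 else \<alpha> - \<alpha>^t) * norm zq"
      using inv[of t t] t by blast
    have e0: "e = 0" using eb G0 by simp
    have "(norm (q t - x t))^2 = (norm (thbar \<theta> t *v (zp + \<alpha>^t *\<^sub>R zq)))^2" using Et e0 by (simp add: E_def)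
    also have "\<dots> = (zp + \<alpha>^t *\<^sub>R zq) \<bullet> ((transpose (thbar \<theta> t) ** thbar \<theta> t) *v (zp + \<alpha>^t *\<^sub>R zq))"
      by (rule AtA_inner[symmetric])
    also have "\<dots> = (norm (zp + \<alpha>^t *\<^sub>R zq))^2"
      using orthbar[of t] t by (simp add: orthogonal_matrix power2_norm_eq_inner)
    also have "\<dots> = \<alpha> ^ (2 * t) * (norm (z - projP (Z 0) *v z))\<^sup>2 + (norm (projP (Z 0) *v z))\<^sup>2"
      unfolding ny zpP zq_def[symmetric] by simp
    finally show "(norm (q t - x t))\<^sup>2 = \<alpha> ^ (2 * t) * (norm (z - projP (Z 0) *v z))\<^sup>2 + (norm (projP (Z 0) *v z))\<^sup>2" .
  qed
qed

end
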